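(* Let $L>0$, $N\in\mathbb N$, and let $\rho^N_L(t)$ be the deterministic particle approximation at a time $t$ (at which it is well defined), constructed from $\rho_{0,L}$ with $\int_{\mathbb T_L}\rho_{0,L}(x)\,dx=c_L$. Then $$\|\phi(\rho^N_L(t))\|_{L^\infty(\mathbb T_L)}\le\Big(\phi\Big(\frac{c_L}{L}\Big)+1\Big)+N\sum_{k=0}^{N-1}|\phi(\rho_{k+1}(t))-\phi(\rho_k(t))|^2.$$
   Context: $\phi:[0,\infty)\to[0,\infty)$ is a continuous strictly increasing function with $\phi(0)=0$ (in the paper $\phi(\rho)=\rho W'(\rho)-W(\rho)$ with further structural assumptions). $K:\mathbb R\to\mathbb R$ is even, continuous, $C^2$ away from $0$, with $K,K'$ bounded. $\mathbb T_L=\mathbb R/L\mathbb Z\cong[-L/2,L/2)$. Deterministic particle approximation: given $\rho_{0,L}\in L^\infty(\mathbb T_L)$, $\rho_{0,L}\ge0$, $c_L=\int_{\mathbb T_L}\rho_{0,L}\le1$, set $x_0=-L/2$, $x_k=\sup\{x:\int_{x_{k-1}}^x\rho_{0,L}<c_L/N\}$, $k=1,\dots,N$; particles $x_k(t)$ (indices mod $N$) solve $\dot x_k=-\frac{c_L}{N}\sum_{j\ne k}K'(x_k-x_j)-\frac{N}{c_L}[\phi(\rho_k)-\phi(\rho_{k-1})]$, $x_k(0)=x_k$, with $\rho_k(t)=\frac{c_L}{N(x_{k+1}(t)-x_k(t))}$, and $\rho^N_L(t,x)=\sum_{k=0}^{N-1}\rho_k(t)\chi_{[x_k(t),x_{k+1}(t))}(x)$;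 well defined at $t$ if $x_0(s)<\dots<x_{N-1}(s)$ for $s\in[0,t]$, in which case $\sum_{k=0}^{N-1}(x_{k+1}(t)-x_k(t))=L$. *)

theory Defs
  imports "HOL-Analysis.Analysis" "HOL-Probability.Essential_Supremum"
begin

text \<open>Particle positions are given by functions x k :: real => real (k < N),
  lifted to the real line. The torus T_L = R / L Z; indices are taken mod N and the
  wrap-around particle x_N is x_0 + L (the lift of x_0 one period later).\<close>

definition ppos :: "(nat \<Rightarrow> real \<Rightarrow> real) \<Rightarrow> real \<Rightarrow> nat \<Rightarrow> nat \<Rightarrow> real \<Rightarrow> real" where
  "ppos x L N k s = (if k < N then x k s else x 0 s + L)"

definition prho :: "(nat \<Rightarrow> real \<Rightarrow> real) \<Rightarrow> real \<Rightarrow> nat \<Rightarrow> real \<Rightarrow> nat \<Rightarrow> real \<Rightarrow> real" where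
  "prho x L N c k s = c / (real N * (ppos x L N (Suc (k mod N)) s - ppos x L N (k mod N) s))"

text \<open>The piecewise constant density rho^N_L(s, y), as an L-periodic function on R
  (i.e. a function on T_L): equal to rho_k(s) on [x_k(s), x_{k+1}(s)) modulo L.\<close>
definition rhoN :: "(nat \<Rightarrow> real \<Rightarrow> real) \<Rightarrow> real \<Rightarrow> nat \<Rightarrow> real \<Rightarrow> real \<Rightarrow> real \<Rightarrow> real" where
  "rhoN x L N c s y = (\<Sum>k<N. prho x L N c k s *
      indicator {z. \<exists>m::int. ppos x L N k s \<le> z + of_int m * L \<and> z + of_int m * L < ppos x L N (Suc k) s} y)"

text \<open>Well-definedness of the particle scheme on [0,t]: strict ordering
  x_0(s) < ... < x_{N-1}(s) < x_0(s) + L for all s in [0,t].\<close>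
definition well_ordered :: "(nat \<Rightarrow> real \<Rightarrow> real) \<Rightarrow> real \<Rightarrow> nat \<Rightarrow> real \<Rightarrow> bool" where
  "well_ordered x L N t \<longleftrightarrow> (\<forall>s\<in>{0..t}. \<forall>k<N. ppos x L N k s < ppos x L N (Suc k) s)"

end

theory Submission
  imports Defs
begin

lemma pos_mono_lt:
  fixes p :: "nat \<Rightarrow> real"
  assumes "\<forall>k<N. p k < p (Suc k)" "i < j" "j \<le> N"
  shows "p i < p j"
  using assms(2,3)
proof (induction j)
  case 0 then show ?case by simp
next
  case (Suc j)
  show ?case
  proof (cases "i = j")
    case True then show ?thesis using assms(1) Suc by auto
  next
    case False
    then have "p i < p j" using Suc by auto
    also have "p j < p (Suc j)" using assms(1) Suc by auto
    finally show ?thesis .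
  qed
qed

lemma pos_mono_le:
  fixes p :: "nat \<Rightarrow> real"
  assumes "\<forall>k<N. p k < p (Suc k)" "i \<le> j" "j \<le> N"
  shows "p i \<le> p j"
  using pos_mono_lt[OF assms(1)] assms(2,3) by (cases "i = j") (auto intro: less_imp_le)

lemma pos_disj:
  fixes p :: "nat \<Rightarrow> real"
  assumes mono: "\<forall>k<N. p k < p (Suc k)" and pN: "p N = p 0 + L" and L: "L > 0"
    and k: "k < N" and j: "j < N"
    and a1: "p k \<le> y + of_int m * L" and a2: "y + of_int m * L < p (Suc k)"
    and b1: "p j \<le> y + of_int m' * L" and b2: "y + of_int m' * L < p (Suc j)"
  shows "k = j"
proof -
  have k0: "p 0 \<le> p k" "p (Suc k) \<le> p N" using pos_mono_le[OF mono] k by auto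
  have j0: "p 0 \<le> p j" "p (Suc j) \<le> p N" using pos_mono_le[OF mono] j by auto
  have h1: "of_int (m - m') * L < L" and h2: "- L < of_int (m - m') * L"
    using k0 j0 a1 a2 b1 b2 pN by (auto simp: algebra_simps)
  have ia: "of_int (m - m') < (1::real)" using h1 L by (simp add: mult_less_cancel_right2)
  have "(-1) * L < of_int (m - m') * L" using h2 by simp
  then have ib: "-1 < (of_int (m - m')::real)" using L by (simp only: mult_less_cancel_right_pos)
  from ia have "m - m' < 1" by linarith
  moreover from ib have "-1 < m - m'" by linarith
  ultimately have "m = m'" by simp
  show "k = j"
  proof (rule ccontr)
    assume "k \<noteq> j"
    then consider "k < j" | "j < k" by linarith
    then show False
    proof cases
      case 1
      then have "p (Suc k) \<le> p j" using pos_mono_le[OF mono, of "Suc k" j] j by auto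
      then show False using a2 b1 \<open>m = m'\<close> by auto
    next
      case 2
      then have "p (Suc j) \<le> p k" using pos_mono_le[OF mono, of "Suc j" k] k by auto
      then show False using b2 a1 \<open>m = m'\<close> by auto
    qed
  qed
qed

lemma tele_bound:
  fixes f :: "nat \<Rightarrow> real"
  assumes "k \<le> n" "k0 \<le> n"
  shows "\<bar>f k - f k0\<bar> \<le> (\<Sum>j<n. \<bar>f (Suc j) - f j\<bar>)"
proof -
  have gen: "\<bar>f b - f a\<bar> \<le> (\<Sum>j<n. \<bar>f (Suc j) - f j\<bar>)" if "a \<le> b" "b \<le> n" for a b
  proof -
    have "\<bar>f b - f a\<bar> = \<bar>\<Sum>j=a..<b. f (Suc j) - f j\<bar>" using sum_Suc_diff'[OF that(1), of f] by simp
    also have "\<dots> \<le> (\<Sum>j=a..<b. \<bar>f (Suc j) - f j\<bar>)" by (rule sum_abs)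
    also have "\<dots> \<le> (\<Sum>j<n. \<bar>f (Suc j) - f j\<bar>)"
      by (rule sum_mono2) (use that in auto)
    finally show ?thesis .
  qed
  show ?thesis
  proof (cases "k0 \<le> k")
    case True then show ?thesis using gen assms by auto
  next
    case False then show ?thesis using gen[of k k0] assms by (simp add: abs_minus_commute)
  qed
qed

lemma abs_sum_sq_bound:
  fixes d :: "nat \<Rightarrow> real"
  assumes "N > 0"
  shows "(\<Sum>j<N. \<bar>d j\<bar>) \<le> 1 + real N * (\<Sum>j<N. (d j)^2)"
proof -
  have "\<bar>d j\<bar> \<le> 1 / real N + real N * (d j)^2" for j
  proof -
    have "real N * \<bar>d j\<bar> \<le> 1 + (real N * \<bar>d j\<bar>)^2"
    proof -
      have "0 \<le> (real N * \<bar>d j\<bar> - 1)^2" by simp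
      then have "0 \<le> (real N * \<bar>d j\<bar>)^2 - 2 * (real N * \<bar>d j\<bar>) + 1" by (simp add: power2_diff)
      moreover have "0 \<le> real N * \<bar>d j\<bar>" by simp
      ultimately show ?thesis by linarith
    qed
    then have "real N * \<bar>d j\<bar> \<le> real N * (1 / real N + real N * (d j)^2)"
      using assms by (simp add: algebra_simps power2_eq_square)
    then show ?thesis using assms by (simp add: mult_le_cancel_left_pos)
  qed
  then have "(\<Sum>j<N. \<bar>d j\<bar>) \<le> (\<Sum>j<N. 1 / real N + real N * (d j)^2)"
    by (rule sum_mono)
  also have "\<dots> = 1 + real N * (\<Sum>j<N. (d j)^2)"
    using assms by (simp add: sum.distrib sum_distrib_left)
  finally show ?thesis .
qed

lemma sum_single_ind:
  fixes a :: "nat \<Rightarrow> real"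
  assumes "finite A" "k \<in> A" "\<And>j. j \<in> A \<Longrightarrow> y \<in> S j \<Longrightarrow> j = k" "y \<in> S k"
  shows "(\<Sum>j\<in>A. a j * indicator (S j) y) = a k"
proof -
  have "(\<Sum>j\<in>A. a j * indicator (S j) y) = (\<Sum>j\<in>A. if j = k then a j else 0)"
  proof (rule sum.cong)
    fix j assume j: "j \<in> A"
    show "a j * indicator (S j) y = (if j = k then a j else 0)"
    proof (cases "j = k")
      case True then show ?thesis using assms(4) by simp
    next
      case False
      then have "y \<notin> S j" using assms(3)[OF j] by blast
      then show ?thesis using False by simp
    qed
  qed simp
  also have "\<dots> = a k" using assms(1,2) by simp
  finally show ?thesis .
qed

lemma sum_zero_ind:
  fixes a :: "nat \<Rightarrow> real"
  assumes "\<And>j. j \<in> A \<Longrightarrow> y \<notin> S j"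
  shows "(\<Sum>j\<in>A. a j * indicator (S j) y) = 0"
  by (rule sum.neutral) (use assms in \<open>auto simp: indicator_def\<close>)

lemma S_borel: "{z::real. \<exists>m::int. a \<le> z + of_int m * L \<and> z + of_int m * L < b} \<in> sets borel"
  by measurable

theorem lemma4p5:
  fixes \<phi> K dK rho0 :: "real \<Rightarrow> real"
    and L c t :: real and N :: nat
    and x :: "nat \<Rightarrow> real \<Rightarrow> real"
  assumes L_pos: "L > 0" and N_pos: "N > 0"
    \<comment> \<open>phi: continuous, strictly increasing on [0,oo), phi(0)=0, nonnegative\<close>
    and phi_cont: "continuous_on {0..} \<phi>"
    and phi_mono: "strict_mono_on {0..} \<phi>"
    and phi_0: "\<phi> 0 = 0"
    and phi_nonneg: "\<And>r. r \<ge> 0 \<Longrightarrow> \<phi> r \<ge> 0"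
    \<comment> \<open>K even, continuous, C^2 away from 0 (derivative dK), K and K' bounded\<close>
    and K_even: "\<And>z. K (- z) = K z"
    and K_cont: "continuous_on UNIV K"
    and K_deriv: "\<And>z. z \<noteq> 0 \<Longrightarrow> (K has_real_derivative dK z) (at z)"
    and K_C2: "\<exists>ddK. (\<forall>z. z \<noteq> 0 \<longrightarrow> (dK has_real_derivative ddK z) (at z))
                    \<and> continuous_on (- {0}) ddK"
    and K_bdd: "bounded (range K)"
    and dK_bdd: "bounded (dK ` (- {0}))"
    \<comment> \<open>initial datum rho_{0,L} in L^oo(T_L), nonnegative, mass c_L \<le> 1\<close>
    and rho0_periodic: "\<And>y. rho0 (y + L) = rho0 y"
    and rho0_meas: "rho0 \<in> borel_measurable lebesgue"
    and rho0_bdd: "\<exists>B. AE y in lebesgue. \<bar>rho0 y\<bar> \<le> B"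
    and rho0_nonneg: "AE y in lebesgue. rho0 y \<ge> 0"
    and c_def: "c = integral {-L/2..L/2} rho0"
    and c_le: "c \<le> 1"
    \<comment> \<open>initial particle positions\<close>
    and x0_init: "x 0 0 = - L / 2"
    and xk_init: "\<And>k. 1 \<le> k \<Longrightarrow> k < N \<Longrightarrow>
                   x k 0 = Sup {y. integral {x (k - 1) 0..y} rho0 < c / real N}"
    \<comment> \<open>the particle ODE system on [0,t]\<close>
    and t_nonneg: "t \<ge> 0"
    and ode: "\<And>k s. k < N \<Longrightarrow> s \<in> {0..t} \<Longrightarrow>
       (x k has_real_derivative
          (- (c / real N) * (\<Sum>j\<in>{..<N} - {k}. dK (x k s - x j s))
           - (real N / c) * (\<phi> (prho x L N c k s) - \<phi> (prho x L N c (k + N - 1) s))))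
       (at s within {0..t})"
    \<comment> \<open>the scheme is well defined at time t\<close>
    and wd: "well_ordered x L N t"
  shows "esssup (lebesgue_on {-L/2..<L/2}) (\<lambda>y. ereal \<bar>\<phi> (rhoN x L N c t y)\<bar>)
         \<le> ereal ((\<phi> (c / L) + 1)
             + real N * (\<Sum>k<N. \<bar>\<phi> (prho x L N c (k + 1) t) - \<phi> (prho x L N c k t)\<bar>^2))"
proof -
  define p where "p k = ppos x L N k t" for k
  define r where "r k = prho x L N c k t" for k
  define S where "S k = {z. \<exists>m::int. p k \<le> z + of_int m * L \<and> z + of_int m * L < p (Suc k)}" for k
  define B where "B = (\<phi> (c / L) + 1) + real N * (\<Sum>k<N. \<bar>\<phi> (r (k + 1)) - \<phi> (r k)\<bar>^2)"
  have mono: "\<forall>k<N. p k < p (Suc k)" using wd t_nonneg unfolding well_ordered_def p_def by auto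
  have pN: "p N = p 0 + L" using N_pos by (simp add: p_def ppos_def)
  have c_nn: "c \<ge> 0"
  proof -
    obtain Z where Z: "Z \<in> null_sets lebesgue" "{y. \<not> rho0 y \<ge> 0} \<subseteq> Z"
      using rho0_nonneg by (auto simp: eventually_ae_filter)
    have "negligible Z" using Z negligible_iff_null_sets by blast
    have "integral {-L/2..L/2} rho0 = integral {-L/2..L/2} (\<lambda>y. max (rho0 y) 0)"
      by (rule integral_spike[OF \<open>negligible Z\<close>]) (use Z in force)
    also have "\<dots> \<ge> 0"
    proof (cases "(\<lambda>y. max (rho0 y) 0) integrable_on {-L/2..L/2}")
      case True then show ?thesis by (rule Henstock_Kurzweil_Integration.integral_nonneg) auto
    next
      case False then show ?thesis by (simp add: not_integrable_integral)
    qed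
    finally show ?thesis using c_def by simp
  qed
  have r_alt: "r k = c / (real N * (p (Suc (k mod N)) - p (k mod N)))" for k
    by (simp add: r_def p_def prho_def)
  have r_nn: "r k \<ge> 0" for k
  proof -
    have "p (k mod N) < p (Suc (k mod N))" using mono N_pos by auto
    then show ?thesis using c_nn by (simp add: r_alt)
  qed
  obtain k0 where k0: "k0 < N" "r k0 \<le> c / L"
  proof -
    have "(\<Sum>k<N. p (Suc k) - p k) = L" using pN by (simp add: sum_lessThan_telescope)
    have "\<exists>k<N. p (Suc k) - p k \<ge> L / real N"
    proof (rule ccontr)
      assume "\<not> ?thesis"
      then have "(\<Sum>k<N. p (Suc k) - p k) < (\<Sum>k<N. L / real N)"
        using N_pos by (intro sum_strict_mono) auto
      then show False using \<open>(\<Sum>k<N. p (Suc k) - p k) = L\<close> N_pos by simp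
    qed
    then obtain k where k: "k < N" "p (Suc k) - p k \<ge> L / real N" by auto
    have "r k = c / (real N * (p (Suc k) - p k))" using k by (simp add: r_alt)
    also have "\<dots> \<le> c / (real N * (L / real N))"
      using k N_pos L_pos c_nn mono by (intro divide_left_mono mult_left_mono mult_pos_pos) auto
    also have "\<dots> = c / L" using N_pos by simp
    finally show ?thesis using that k by auto
  qed
  have phi_le: "\<phi> a \<le> \<phi> b" if "0 \<le> a" "a \<le> b" for a b
    using phi_mono that unfolding strict_mono_on_def by (cases "a = b") (auto intro: less_imp_le)
  have phik0: "\<phi> (r k0) \<le> \<phi> (c / L)" using phi_le r_nn k0 by auto
  have rk_bound: "\<phi> (r k) \<le> B" if "k < N" for k
  proof -
    have "\<bar>\<phi> (r k) - \<phi> (r k0)\<bar> \<le> (\<Sum>j<N. \<bar>\<phi> (r (Suc j)) - \<phi> (r j)\<bar>)"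
      using tele_bound[of k N k0 "\<lambda>j. \<phi> (r j)"] that k0 by auto
    also have "\<dots> \<le> 1 + real N * (\<Sum>j<N. (\<phi> (r (Suc j)) - \<phi> (r j))^2)"
      by (rule abs_sum_sq_bound[OF N_pos])
    finally show ?thesis using phik0 unfolding B_def by (simp add: power2_abs)
  qed
  have B_pos: "0 \<le> B"
  proof -
    have "\<phi> (c / L) \<ge> 0" using phi_nonneg c_nn L_pos by auto
    moreover have "0 \<le> real N * (\<Sum>k<N. \<bar>\<phi> (r (k + 1)) - \<phi> (r k)\<bar>^2)" by (intro mult_nonneg_nonneg sum_nonneg) auto
    ultimately show ?thesis unfolding B_def by linarith
  qed
  have rhoN_eq: "rhoN x L N c t y = (\<Sum>k<N. r k * indicator (S k) y)" for y
    by (simp add: rhoN_def r_def S_def p_def)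
  have pw: "\<phi> (rhoN x L N c t y) = (\<Sum>k<N. \<phi> (r k) * indicator (S k) y)" for y
  proof (cases "\<exists>k<N. y \<in> S k")
    case True
    then obtain k where k: "k < N" "y \<in> S k" by auto
    have uniq: "j = k" if jN: "j < N" and yS: "y \<in> S j" for j
    proof -
      obtain m where m1: "p k \<le> y + of_int m * L" "y + of_int m * L < p (Suc k)" using k by (auto simp: S_def)
      moreover obtain m' where m2: "p j \<le> y + of_int m' * L" "y + of_int m' * L < p (Suc j)"
        using yS by (auto simp: S_def)
      ultimately show ?thesis using pos_disj[OF mono pN L_pos jN k(1) m2 m1] by blast
    qed
    have "(\<Sum>k<N. r k * indicator (S k) y) = r k"
      by (rule sum_single_ind[where A="{..<N}" and k=k and S=S and y=y]) (simp, use k in simp, use uniq in blast, use k in simp)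
    moreover have "(\<Sum>k<N. \<phi> (r k) * indicator (S k) y) = \<phi> (r k)"
      by (rule sum_single_ind[where A="{..<N}" and k=k and S=S and y=y]) (simp, use k in simp, use uniq in blast, use k in simp)
    ultimately show ?thesis using k by (simp add: rhoN_eq)
  next
    case False
    then have "(\<Sum>k<N. r k * indicator (S k) y) = 0" "(\<Sum>k<N. \<phi> (r k) * indicator (S k) y) = 0"
      by (auto intro!: sum_zero_ind)
    then show ?thesis by (simp add: rhoN_eq phi_0)
  qed
  have pwb: "\<bar>\<phi> (rhoN x L N c t y)\<bar> \<le> B" for y
  proof (cases "\<exists>k<N. y \<in> S k")
    case True
    then obtain k where k: "k < N" "y \<in> S k" by auto
    have "rhoN x L N c t y \<ge> 0" unfolding rhoN_eq using r_nn by (auto intro!: sum_nonneg)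
    then have "\<bar>\<phi> (rhoN x L N c t y)\<bar> = \<phi> (rhoN x L N c t y)" using phi_nonneg by auto
    also have "\<dots> \<le> B"
    proof -
      have uniq: "j = k" if jN: "j < N" and yS: "y \<in> S j" for j
      proof -
        obtain m where m1: "p k \<le> y + of_int m * L" "y + of_int m * L < p (Suc k)" using k by (auto simp: S_def)
        moreover obtain m' where m2: "p j \<le> y + of_int m' * L" "y + of_int m' * L < p (Suc j)"
          using yS by (auto simp: S_def)
        ultimately show ?thesis using pos_disj[OF mono pN L_pos jN k(1) m2 m1] by blast
      qed
      have "(\<Sum>k<N. \<phi> (r k) * indicator (S k) y) = \<phi> (r k)"
        by (rule sum_single_ind[where A="{..<N}" and k=k and S=S and y=y]) (simp, use k in simp, use uniq in blast, use k in simp)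
      then show ?thesis using pw rk_bound k by simp
    qed
    finally show ?thesis .
  next
    case False
    then have "(\<Sum>k<N. r k * indicator (S k) y) = 0"
      by (auto intro!: sum_zero_ind)
    then show ?thesis using B_pos by (simp add: rhoN_eq phi_0)
  qed
  have Smeas: "S k \<in> sets borel" for k unfolding S_def by (rule S_borel)
  have meas0: "(\<lambda>y. \<bar>\<Sum>k<N. \<phi> (r k) * indicator (S k) y\<bar>) \<in> borel_measurable borel"
    by (intro borel_measurable_abs borel_measurable_sum borel_measurable_times borel_measurable_const borel_measurable_indicator Smeas)
  have meas: "(\<lambda>y. ereal \<bar>\<phi> (rhoN x L N c t y)\<bar>) \<in> borel_measurable (lebesgue_on {-L/2..<L/2})"
  proof -
    have m1: "(\<lambda>y. \<bar>\<phi> (rhoN x L N c t y)\<bar>) \<in> borel_measurable borel" using meas0 by (simp add: pw)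
    show ?thesis
      using borel_measurable_ereal[OF m1] by (simp add: measurable_completion measurable_restrict_space1)
  qed
  have "esssup (lebesgue_on {-L/2..<L/2}) (\<lambda>y. ereal \<bar>\<phi> (rhoN x L N c t y)\<bar>) \<le> ereal B"
    by (rule esssup_I[OF meas]) (use pwb in auto)
  then show ?thesis unfolding B_def r_def .
qed

end
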